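(* $b\underline{\mathcal D}=b\overline{\mathcal D}=\overline{\mathcal{BD}}$.
   Context: $\mathbb N$ denotes the positive integers. For $A\subseteq\mathbb N$: lower density $\underline d(A)=\liminf_n \#\{k\le n:k\in A\}/n$, upper density $\overline d(A)=\limsup_n \#\{k\le n:k\in A\}/n$, upper Banach density $\overline{Bd}(A)=\lim_n\sup_k \#(A\cap[k,k+n])/n$. $\underline{\mathcal D}=\{A:\underline d(A)>0\}$, $\overline{\mathcal D}=\{A:\overline d(A)>0\}$, $\overline{\mathcal{BD}}=\{A:\overline{Bd}(A)>0\}$. For a family $\mathcal F$ of subsets of $\mathbb N$, the block family $b\mathcal F$ is defined by: $S\in b\mathcal F$ iff there is $F\in\mathcal F$ such that for every finite $R\subseteq F$ there is $n\in\mathbb N$ with $R+n=\{r+n:r\in R\}\subseteq S$. *)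

theory Defs
  imports "HOL-Analysis.Analysis"
begin

text \<open>Subsets of the positive integers are modelled as sets of naturals
contained in {0<..}. Densities take values in ereal (they lie in [0,1]).\<close>

definition count_upto :: "nat set \<Rightarrow> nat \<Rightarrow> nat" where
  "count_upto A n = card {k \<in> A. 1 \<le> k \<and> k \<le> n}"

definition lower_density :: "nat set \<Rightarrow> ereal" where
  "lower_density A = liminf (\<lambda>n. ereal (real (count_upto A n) / real n))"

definition upper_density :: "nat set \<Rightarrow> ereal" where
  "upper_density A = limsup (\<lambda>n. ereal (real (count_upto A n) / real n))"

definition upper_banach_density :: "nat set \<Rightarrow> ereal" where
  "upper_banach_density A =
     lim (\<lambda>n. SUP k\<in>{1..}. ereal (real (card (A \<inter> {k..k+n})) / real n))"

definition posint_sets :: "nat set set" where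
  "posint_sets = {A. A \<subseteq> {0<..}}"

definition LowerD :: "nat set set" where
  "LowerD = {A \<in> posint_sets. lower_density A > 0}"

definition UpperD :: "nat set set" where
  "UpperD = {A \<in> posint_sets. upper_density A > 0}"

definition UpperBD :: "nat set set" where
  "UpperBD = {A \<in> posint_sets. upper_banach_density A > 0}"

definition block_family :: "nat set set \<Rightarrow> nat set set" where
  "block_family \<F> = {S \<in> posint_sets. \<exists>F\<in>\<F>. \<forall>R. finite R \<and> R \<subseteq> F \<longrightarrow>
       (\<exists>n::nat. n > 0 \<and> (\<lambda>r. r + n) ` R \<subseteq> S)}"

end

theory Submission
  imports Defs
begin

definition cnt :: "nat set \<Rightarrow> nat \<Rightarrow> nat \<Rightarrow> nat" where
  "cnt S k m = card (S \<inter> {k..<k+m})"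

definition bmax :: "nat set \<Rightarrow> nat \<Rightarrow> nat" where
  "bmax S m = Max {cnt S k m | k. k \<ge> 1}"

lemma cnt_le: "cnt S k m \<le> m"
  unfolding cnt_def using card_mono[of "{k..<k+m}" "S \<inter> {k..<k+m}"] by auto

lemma cnt_add: "cnt S k (m+n) = cnt S k m + cnt S (k+m) n"
proof -
  have "S \<inter> {k..<k+(m+n)} = (S \<inter> {k..<k+m}) \<union> (S \<inter> {k+m..<k+m+n})" by auto
  moreover have "(S \<inter> {k..<k+m}) \<inter> (S \<inter> {k+m..<k+m+n}) = {}" by auto
  ultimately show ?thesis unfolding cnt_def
    by (simp add: card_Un_disjoint add.assoc)
qed

lemma bset_fin: "finite {cnt S k m | k. k \<ge> 1}"
  by (rule finite_subset[of _ "{..m}"]) (auto simp: cnt_le)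

lemma bmax_ge: "k \<ge> 1 \<Longrightarrow> cnt S k m \<le> bmax S m"
  unfolding bmax_def by (rule Max_ge[OF bset_fin]) auto

lemma bmax_att: "\<exists>k\<ge>1. bmax S m = cnt S k m"
proof -
  have "bmax S m \<in> {cnt S k m | k. k \<ge> 1}"
    unfolding bmax_def by (rule Max_in[OF bset_fin]) auto
  then show ?thesis by auto
qed

lemma bmax_le: "bmax S m \<le> m"
  using bmax_att[of S m] cnt_le by metis

lemma bmax_sub: "bmax S (m+n) \<le> bmax S m + bmax S n"
proof -
  obtain k where k: "k \<ge> 1" "bmax S (m+n) = cnt S k (m+n)" using bmax_att by blast
  then show ?thesis using cnt_add[of S k m n] bmax_ge[of k S m] bmax_ge[of "k+m" S n] by simp
qed

lemma bmax_mult: "bmax S (q*m+r) \<le> q * bmax S m + bmax S r"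
proof (induction q)
  case 0 then show ?case by simp
next
  case (Suc q)
  have "bmax S (Suc q * m + r) = bmax S (m + (q*m+r))" by (simp add: add.assoc)
  also have "\<dots> \<le> bmax S m + bmax S (q*m+r)" by (rule bmax_sub)
  also have "\<dots> \<le> Suc q * bmax S m + bmax S r" using Suc by simp
  finally show ?case .
qed

lemma bmax_ratio:
  assumes "1 \<le> m" "1 \<le> n"
  shows "real (bmax S n) / n \<le> real (bmax S m) / m + real m / n"
proof -
  define q where "q = n div m"
  have n: "n = q*m + n mod m" unfolding q_def by simp
  have a: "bmax S n \<le> q * bmax S m + bmax S (n mod m)"
    using bmax_mult[of S q m "n mod m"] unfolding q_def by simp
  have nm: "n mod m < m" using assms by simp
  have b: "bmax S (n mod m) \<le> m" using bmax_le[of S "n mod m"] nm by linarith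
  have "bmax S n \<le> q * bmax S m + m" using a b by linarith
  then have "real (bmax S n) \<le> real (q * bmax S m + m)" by (simp only: of_nat_le_iff)
  then have 1: "real (bmax S n) \<le> real q * bmax S m + m" by simp
  have qmn: "q * m \<le> n" unfolding q_def by (rule div_times_less_eq_dividend)
  have "q * m * bmax S m \<le> n * bmax S m" by (rule mult_right_mono[OF qmn]) simp
  then have "real (q * m * bmax S m) \<le> real (n * bmax S m)" by (simp only: of_nat_le_iff)
  then have qm2: "real q * real (bmax S m) * real m \<le> real (bmax S m) * real n"
    by (simp add: algebra_simps)
  have 2: "real q * bmax S m / n \<le> real (bmax S m) / m"
    using qm2 assms by (simp add: field_simps)
  have "real (bmax S n) / n \<le> (real q * bmax S m + m) / n"
    using 1 assms by (simp add: divide_right_mono)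
  also have "\<dots> = real q * bmax S m / n + real m / n" by (simp add: add_divide_distrib)
  finally show ?thesis using 2 by linarith
qed

lemma div_cancel_aux: "(a::real) \<noteq> 0 \<Longrightarrow> x / a * (a / b) = x / b"
  by (cases "b = 0") (simp_all add: field_simps)

definition dens :: "nat set \<Rightarrow> real" where
  "dens S = Inf ((\<lambda>m. real (bmax S m) / real m) ` {1..})"

lemma dens_bdd: "bdd_below ((\<lambda>m. real (bmax S m) / real m) ` {1..})"
  by (rule bdd_belowI[of _ 0]) auto

lemma dens_le: "m \<ge> 1 \<Longrightarrow> dens S \<le> real (bmax S m) / real m"
  unfolding dens_def by (rule cInf_lower[OF _ dens_bdd]) auto

lemma dens_ge0: "0 \<le> dens S"
  unfolding dens_def by (rule cInf_greatest) auto

lemma dens_approx: "e > 0 \<Longrightarrow> \<exists>m\<ge>1. real (bmax S m) / real m < dens S + e"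
proof -
  assume e: "e > 0"
  have "Inf ((\<lambda>m. real (bmax S m) / real m) ` {1..}) < dens S + e"
    using e unfolding dens_def by simp
  then show ?thesis
    by (subst (asm) cInf_less_iff[OF _ dens_bdd]) auto
qed

lemma dens_lim: "(\<lambda>n. real (bmax S n) / real n) \<longlonglongrightarrow> dens S"
proof (rule LIMSEQ_I)
  fix r :: real assume r: "r > 0"
  obtain m where m: "m \<ge> 1" "real (bmax S m) / real m < dens S + r/2"
    using dens_approx[of "r/2" S] r by auto
  obtain N :: nat where N: "real N > 2 * m / r" using reals_Archimedean2 by blast
  show "\<exists>no. \<forall>n\<ge>no. norm (real (bmax S n) / real n - dens S) < r"
  proof (intro exI allI impI)
    fix n assume n: "max 1 N \<le> n"
    then have n1: "n \<ge> 1" and nN: "N \<le> n" by auto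
    have "real m / n < r/2"
    proof -
      have "2 * m / r < n" using N nN by linarith
      then have "2 * m < n * r" using r by (simp add: field_simps)
      then show ?thesis using n1 by (simp add: field_simps)
    qed
    moreover have "real (bmax S n) / n \<le> real (bmax S m) / m + real m / n"
      by (rule bmax_ratio[OF m(1) n1])
    moreover have "dens S \<le> real (bmax S n) / n" by (rule dens_le[OF n1])
    ultimately have A: "real (bmax S n) / n - dens S < r"
      and B: "0 \<le> real (bmax S n) / n - dens S" using m(2) by linarith+
    then show "norm (real (bmax S n) / real n - dens S) < r" by simp
  qed
qed

lemma ubd_eq: "upper_banach_density S = ereal (dens S)"
proof -
  have sup: "(SUP k\<in>{1..}. ereal (real (card (S \<inter> {k..k+n})) / real n))
      = ereal (real (bmax S (Suc n)) / real n)" for n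
  proof (rule SUP_eqI)
    fix k :: nat assume k: "k \<in> {1..}"
    have "card (S \<inter> {k..k+n}) = cnt S k (Suc n)" unfolding cnt_def
      by (metis add_Suc_right atLeastLessThanSuc_atLeastAtMost)
    then have "card (S \<inter> {k..k+n}) \<le> bmax S (Suc n)" using bmax_ge[of k S] k by simp
    then show "ereal (real (card (S \<inter> {k..k+n})) / real n) \<le> ereal (real (bmax S (Suc n)) / real n)"
      by (simp add: divide_right_mono)
  next
    fix y assume y: "\<And>k. k \<in> {1..} \<Longrightarrow> ereal (real (card (S \<inter> {k..k+n})) / real n) \<le> y"
    obtain k where k: "k \<ge> 1" "bmax S (Suc n) = cnt S k (Suc n)" using bmax_att by blast
    have "card (S \<inter> {k..k+n}) = cnt S k (Suc n)" unfolding cnt_def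
      by (metis add_Suc_right atLeastLessThanSuc_atLeastAtMost)
    then show "ereal (real (bmax S (Suc n)) / real n) \<le> y" using y[of k] k by simp
  qed
  have t1: "(\<lambda>n. real (bmax S (Suc n)) / real (Suc n) * (real (Suc n) / real n)) \<longlonglongrightarrow> dens S * 1"
    by (intro tendsto_mult LIMSEQ_Suc[OF dens_lim] LIMSEQ_Suc_n_over_n)
  have ev: "eventually (\<lambda>n. real (bmax S (Suc n)) / real (Suc n) * (real (Suc n) / real n)
       = real (bmax S (Suc n)) / real n) sequentially"
    using eventually_gt_at_top[of "0::nat"] by eventually_elim (rule div_cancel_aux, simp)
  have "(\<lambda>n. real (bmax S (Suc n)) / real n) \<longlonglongrightarrow> dens S"
    using Lim_transform_eventually[OF t1 ev] by simp
  then have "(\<lambda>n. ereal (real (bmax S (Suc n)) / real n)) \<longlonglongrightarrow> ereal (dens S)"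
    by (rule tendsto_ereal)
  then show ?thesis unfolding upper_banach_density_def sup by (rule limI)
qed


lemma win_card: "card {x\<in>{1..i}. x+s\<in>S} = cnt S (s+1) i"
proof -
  have eq: "S \<inter> {s+1..<s+1+i} = (\<lambda>x. x+s) ` {x\<in>{1..i}. x+s\<in>S}"
  proof
    show "S \<inter> {s+1..<s+1+i} \<subseteq> (\<lambda>x. x+s) ` {x\<in>{1..i}. x+s\<in>S}"
    proof
      fix y assume y: "y \<in> S \<inter> {s+1..<s+1+i}"
      then have "y = (y-s)+s" "y - s \<in> {x\<in>{1..i}. x+s\<in>S}" by auto
      then show "y \<in> (\<lambda>x. x+s) ` {x\<in>{1..i}. x+s\<in>S}" by (rule image_eqI)
    qed
  qed auto
  have "inj_on (\<lambda>x. x+s) {x\<in>{1..i}. x+s\<in>S}" by (auto simp: inj_on_def)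
  then show ?thesis unfolding cnt_def eq by (simp add: card_image)
qed

lemma greedy:
  assumes c: "c > 0" and dS: "\<And>m. m \<ge> 1 \<Longrightarrow> 2*c*m \<le> real (bmax S m)"
  shows "\<exists>s\<ge>1. \<forall>i\<le>L. c * i \<le> real (cnt S (s+1) i)"
proof -
  obtain m :: nat where m0: "(real L + 1) / c < m" using reals_Archimedean2 by blast
  have cm: "real L + 1 < c * m" using m0 c by (simp add: field_simps)
  have m1: "m \<ge> 1"
  proof (rule ccontr)
    assume "\<not> m \<ge> 1" then have "m = 0" by simp
    then show False using cm by simp
  qed
  obtain k where k: "k \<ge> 1" "bmax S m = cnt S k m" using bmax_att by blast
  define f where "f j = real (cnt S k j) - c * j" for j
  define v where "v = Min (f ` {1..m})"
  have fin: "finite (f ` {1..m})" "f ` {1..m} \<noteq> {}" using m1 by auto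
  have "v \<in> f ` {1..m}" unfolding v_def by (rule Min_in[OF fin])
  then obtain j0 where j0: "j0 \<in> {1..m}" "f j0 = v" by auto
  have minj: "f j0 \<le> f j" if "j \<in> {1..m}" for j
    using Min_le[OF fin(1)] that j0(2) unfolding v_def by auto
  have j0m: "j0 \<le> m" and j01: "j0 \<ge> 1" using j0 by auto
  have "f j0 \<le> f 1" using minj m1 by simp
  moreover have "cnt S k 1 \<le> 1" by (rule cnt_le)
  ultimately have A: "real (cnt S k j0) \<le> 1 - c + c * j0" unfolding f_def by simp
  have "cnt S k m = cnt S k j0 + cnt S (k+j0) (m-j0)" using cnt_add[of S k j0 "m-j0"] j0m by simp
  moreover have "cnt S (k+j0) (m-j0) \<le> m - j0" by (rule cnt_le)
  ultimately have "cnt S k m \<le> cnt S k j0 + (m - j0)" by simp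
  then have B: "real (cnt S k m) \<le> real (cnt S k j0) + real m - real j0"
    using j0m by (simp add: of_nat_diff[symmetric] del: of_nat_diff)
  have C: "2*c*m \<le> real (cnt S k m)" using dS[OF m1] k by simp
  have D: "c * j0 \<le> c * m" using j0m c by (simp add: mult_left_mono)
  have E: "2*c*m = c*m + c*m" by simp
  have len: "real L \<le> real m - real j0" using A B C D E cm c by linarith
  show ?thesis
  proof (intro exI[of _ "k+j0-1"] conjI allI impI)
    show "k + j0 - 1 \<ge> 1" using k j01 by simp
    fix i assume i: "i \<le> L"
    have ij: "j0 + i \<in> {1..m}" using len i j01 by auto
    have "f j0 \<le> f (j0+i)" by (rule minj[OF ij])
    moreover have "cnt S k (j0+i) = cnt S k j0 + cnt S (k+j0) i" by (rule cnt_add)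
    ultimately have "c * i \<le> real (cnt S (k+j0) i)" unfolding f_def by (simp add: algebra_simps)
    moreover have "k + j0 - 1 + 1 = k + j0" using k by simp
    ultimately show "c * i \<le> real (cnt S (k + j0 - 1 + 1) i)" by simp
  qed
qed

definition good :: "nat set \<Rightarrow> real \<Rightarrow> nat \<Rightarrow> nat set \<Rightarrow> bool" where
  "good S c j P \<longleftrightarrow> (\<forall>L. \<exists>s\<ge>1. (\<forall>i\<le>L. c * i \<le> real (cnt S (s+1) i)) \<and> {x\<in>{1..j}. x+s\<in>S} = P)"

primrec G :: "nat set \<Rightarrow> real \<Rightarrow> nat \<Rightarrow> nat set" where
  "G S c 0 = {}"
| "G S c (Suc j) = (if good S c (Suc j) (insert (Suc j) (G S c j)) then insert (Suc j) (G S c j) else G S c j)"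

lemma G_sub: "G S c j \<subseteq> {1..j}"
  by (induction j) auto

lemma good_step:
  assumes g: "good S c j P" and P: "P \<subseteq> {1..j}"
  shows "good S c (Suc j) (insert (Suc j) P) \<or> good S c (Suc j) P"
proof (rule ccontr)
  assume "\<not> ?thesis"
  then obtain L1 L2 where
    h1: "\<And>s. s \<ge> 1 \<Longrightarrow> \<not> ((\<forall>i\<le>L1. c * i \<le> real (cnt S (s+1) i)) \<and> {x\<in>{1..Suc j}. x+s\<in>S} = insert (Suc j) P)"
    and h2: "\<And>s. s \<ge> 1 \<Longrightarrow> \<not> ((\<forall>i\<le>L2. c * i \<le> real (cnt S (s+1) i)) \<and> {x\<in>{1..Suc j}. x+s\<in>S} = P)"
    unfolding good_def by blast
  obtain s where s: "s \<ge> 1" "\<forall>i\<le>max L1 L2. c * i \<le> real (cnt S (s+1) i)"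
      and pat: "{x\<in>{1..j}. x+s\<in>S} = P"
    using g unfolding good_def by blast
  have W1: "\<forall>i\<le>L1. c * i \<le> real (cnt S (s+1) i)" and W2: "\<forall>i\<le>L2. c * i \<le> real (cnt S (s+1) i)"
    using s(2) by auto
  have split: "{x\<in>{1..Suc j}. x+s\<in>S} = {x\<in>{1..j}. x+s\<in>S} \<union> (if Suc j + s \<in> S then {Suc j} else {})"
    by (auto simp: le_Suc_eq)
  show False
  proof (cases "Suc j + s \<in> S")
    case True
    then have "{x\<in>{1..Suc j}. x+s\<in>S} = insert (Suc j) P" using split pat by auto
    then show False using h1[OF s(1)] W1 by blast
  next
    case False
    then have "{x\<in>{1..Suc j}. x+s\<in>S} = P" using split pat by auto
    then show False using h2[OF s(1)] W2 by blast
  qed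
qed

lemma good_G:
  assumes "good S c 0 {}"
  shows "good S c j (G S c j)"
proof (induction j)
  case 0 then show ?case using assms by simp
next
  case (Suc j)
  show ?case using good_step[OF Suc G_sub] by auto
qed

lemma G_suc1: "G S c n \<subseteq> G S c (Suc n)" by auto
lemma G_suc2: "G S c (Suc n) \<subseteq> insert (Suc n) (G S c n)" by auto

lemma G_mono: "j \<le> j' \<Longrightarrow> G S c j \<subseteq> G S c j'"
  using lift_Suc_mono_le[of "G S c", OF G_suc1] by blast

lemma G_restr: "j \<le> j' \<Longrightarrow> G S c j' \<inter> {1..j} = G S c j"
proof (induction j' rule: dec_induct)
  case base then show ?case using G_sub[of S c j] by blast
next
  case (step n)
  have h1: "G S c (Suc n) \<subseteq> insert (Suc n) (G S c n)" by (rule G_suc2)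
  have h2: "G S c n \<subseteq> G S c (Suc n)" by (rule G_suc1)
  have h3: "Suc n \<notin> {1..j}" using step(1) by simp
  have "G S c (Suc n) \<inter> {1..j} = G S c n \<inter> {1..j}" using h1 h2 h3 by blast
  then show ?case using step(3) by simp
qed

lemma UF_restr: "(\<Union>j. G S c j) \<inter> {1..j} = G S c j"
proof
  show "(\<Union>j. G S c j) \<inter> {1..j} \<subseteq> G S c j"
  proof
    fix x assume "x \<in> (\<Union>j. G S c j) \<inter> {1..j}"
    then obtain j' where x: "x \<in> G S c j'" "x \<in> {1..j}" by auto
    show "x \<in> G S c j"
    proof (cases "j' \<le> j")
      case True
      have "G S c j' \<subseteq> G S c j" by (rule G_mono[OF True])
      then show ?thesis using x by blast
    next
      case False
      then have "j \<le> j'" by simp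
      then have "G S c j' \<inter> {1..j} = G S c j" by (rule G_restr)
      then show ?thesis using x by blast
    qed
  qed
next
  show "G S c j \<subseteq> (\<Union>j. G S c j) \<inter> {1..j}" using G_sub[of S c j] by blast
qed


lemma bf_mono: "A \<subseteq> B \<Longrightarrow> block_family A \<subseteq> block_family B"
  unfolding block_family_def by auto

lemma LowerD_sub: "LowerD \<subseteq> UpperD"
proof
  fix A assume "A \<in> LowerD"
  moreover have "lower_density A \<le> upper_density A"
    unfolding lower_density_def upper_density_def by (rule Liminf_le_Limsup) simp
  ultimately show "A \<in> UpperD" unfolding LowerD_def UpperD_def by auto
qed

lemma count_eq: "count_upto F n = card (F \<inter> {1..n})"
proof -
  have "{k \<in> F. 1 \<le> k \<and> k \<le> n} = F \<inter> {1..n}" by auto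
  then show ?thesis unfolding count_upto_def by simp
qed

lemma bUpper_sub: "block_family UpperD \<subseteq> UpperBD"
proof
  fix S assume "S \<in> block_family UpperD"
  then have S: "S \<in> posint_sets" and "\<exists>F\<in>UpperD. \<forall>R. finite R \<and> R \<subseteq> F \<longrightarrow>
       (\<exists>n::nat. n > 0 \<and> (\<lambda>r. r + n) ` R \<subseteq> S)"
    unfolding block_family_def by simp_all
  then obtain F where F: "F \<in> UpperD" and hF0: "\<forall>R. finite R \<and> R \<subseteq> F \<longrightarrow>
       (\<exists>n::nat. n > 0 \<and> (\<lambda>r. r + n) ` R \<subseteq> S)" by blast
  have hF: "\<exists>n::nat. n > 0 \<and> (\<lambda>r. r + n) ` R \<subseteq> S" if "finite R" "R \<subseteq> F" for R
    using hF0 that by blast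
  have cb: "count_upto F n \<le> bmax S n" for n
  proof -
    define R where "R = F \<inter> {1..n}"
    have "finite R" "R \<subseteq> F" unfolding R_def by auto
    then obtain t :: nat where t: "t > 0" "(\<lambda>r. r + t) ` R \<subseteq> S" using hF by blast
    have "(\<lambda>r. r + t) ` R \<subseteq> S \<inter> {1+t..<1+t+n}"
    proof
      fix y assume y: "y \<in> (\<lambda>r. r + t) ` R"
      then obtain r where r: "r \<in> R" "y = r + t" by blast
      have "y \<in> S" using y t(2) by blast
      moreover have "r \<in> {1..n}" using r(1) unfolding R_def by blast
      ultimately show "y \<in> S \<inter> {1+t..<1+t+n}" using r(2) by simp
    qed
    then have "card ((\<lambda>r. r + t) ` R) \<le> cnt S (1+t) n" unfolding cnt_def
      by (intro card_mono) auto
    moreover have "card ((\<lambda>r. r + t) ` R) = card R" by (rule card_image) (auto simp: inj_on_def)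
    moreover have "cnt S (1+t) n \<le> bmax S n" by (rule bmax_ge) simp
    ultimately show ?thesis unfolding count_eq R_def by simp
  qed
  have "upper_density F \<le> limsup (\<lambda>n. ereal (real (bmax S n) / real n))"
    unfolding upper_density_def
  proof (rule Limsup_mono, rule always_eventually, rule allI)
    fix n
    have "real (count_upto F n) \<le> real (bmax S n)" using cb[of n] by (rule of_nat_mono)
    then have "real (count_upto F n) / real n \<le> real (bmax S n) / real n"
      by (rule divide_right_mono) simp
    then show "ereal (real (count_upto F n) / real n) \<le> ereal (real (bmax S n) / real n)"
      by simp
  qed
  also have "\<dots> = ereal (dens S)"
    by (rule lim_imp_Limsup[OF trivial_limit_sequentially]) (rule tendsto_ereal[OF dens_lim])
  finally have le: "upper_density F \<le> ereal (dens S)" .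
  have "0 < upper_density F" using F unfolding UpperD_def by blast
  then have "0 < upper_banach_density S" unfolding ubd_eq using le by (rule less_le_trans)
  then show "S \<in> UpperBD" using S unfolding UpperBD_def by blast
qed

lemma UpperBD_sub: "UpperBD \<subseteq> block_family LowerD"
proof
  fix S assume "S \<in> UpperBD"
  then have S: "S \<in> posint_sets" and d: "dens S > 0" unfolding UpperBD_def ubd_eq by auto
  define c where "c = dens S / 2"
  have c: "c > 0" using d unfolding c_def by simp
  have dS: "2*c*m \<le> real (bmax S m)" if m: "m \<ge> 1" for m
  proof -
    have "dens S \<le> real (bmax S m) / real m" by (rule dens_le[OF m])
    then show ?thesis using m unfolding c_def by (simp add: field_simps)
  qed
  have g0: "good S c 0 {}" unfolding good_def using greedy[OF c dS] by auto
  define F where "F = (\<Union>j. G S c j)"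
  have Fr: "F \<inter> {1..j} = G S c j" for j unfolding F_def by (rule UF_restr)
  have Fpos: "F \<subseteq> {0<..}" unfolding F_def using G_sub by fastforce
  have dens_F: "c * n \<le> real (count_upto F n)" for n
  proof -
    obtain s where s: "s \<ge> 1" "\<forall>i\<le>n. c * i \<le> real (cnt S (s+1) i)" "{x\<in>{1..n}. x+s\<in>S} = G S c n"
      using good_G[OF g0, of n] unfolding good_def by blast
    have "count_upto F n = card (G S c n)" unfolding count_eq Fr ..
    also have "\<dots> = cnt S (s+1) n" using win_card[of n s S] s(3) by simp
    finally show ?thesis using s(2) by simp
  qed
  have "ereal c \<le> lower_density F"
    unfolding lower_density_def
  proof (rule Liminf_bounded)
    show "\<forall>\<^sub>F n in sequentially. ereal c \<le> ereal (real (count_upto F n) / real n)"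
      using eventually_gt_at_top[of "0::nat"]
    proof eventually_elim
      case (elim n)
      then show ?case using dens_F[of n] by (simp add: field_simps)
    qed
  qed
  then have FL: "F \<in> LowerD" using c Fpos unfolding LowerD_def posint_sets_def
    by (simp add: less_le_trans[of 0 "ereal c"])
  have "\<exists>n::nat. n > 0 \<and> (\<lambda>r. r + n) ` R \<subseteq> S" if R: "finite R" "R \<subseteq> F" for R
  proof -
    obtain j where j: "\<forall>x\<in>R. x \<le> j" using R(1) finite_nat_iff_bounded_le by auto
    have RG: "R \<subseteq> G S c j" using R(2) j Fpos Fr[of j] by force
    obtain s where s: "s \<ge> 1" "{x\<in>{1..j}. x+s\<in>S} = G S c j"
      using good_G[OF g0, of j] unfolding good_def by blast
    have "(\<lambda>r. r + s) ` R \<subseteq> S" using RG s(2) by blast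
    then show ?thesis using s(1) by (intro exI[of _ s]) simp
  qed
  then have "\<exists>F\<in>LowerD. \<forall>R. finite R \<and> R \<subseteq> F \<longrightarrow>
       (\<exists>n::nat. n > 0 \<and> (\<lambda>r. r + n) ` R \<subseteq> S)" using FL by blast
  then show "S \<in> block_family LowerD" using S unfolding block_family_def by simp
qed

theorem mainTheorem2:
  shows "block_family LowerD = block_family UpperD \<and> block_family UpperD = UpperBD"
proof -
  have a: "block_family LowerD \<subseteq> block_family UpperD" by (rule bf_mono[OF LowerD_sub])
  show ?thesis using a bUpper_sub UpperBD_sub by blast
qed

end
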